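(* Let $(X,d)$ be a metric space, $\mu$ a non-atomic Borel measure on $X$, $m$ a Borel measure on $X$, $0<p<\infty$, and let $\Gamma^*\subset\Gamma^\mu$ be a family of paths closed under taking non-trivial subpaths such that any two points of $X$ are joined by a path in $\Gamma^*$. If $f,g\in\tilde N^{1,p}$ and $f=g$ $m$-almost everywhere, then $\|f-g\|_{N^{1,p}}=0$.
   Context: A path is a continuous map $\gamma:[a,b]\to X$; a subpath is a restriction to a subinterval, trivial if that interval is a point; $\mathrm{Im}(\gamma)=\gamma([a,b])$. $\mu$ non-atomic: $\mu(\{x\})=0$ for all $x$. $\Gamma^\mu$ is the set of all non-trivial injective paths $\gamma$ with $0<\mu(\mathrm{Im}(\tilde\gamma))<\infty$ for every non-trivial subpath $\tilde\gamma$. For Borel $g\ge0$, $\int_\gamma g:=\int_{\mathrm{Im}(\gamma)}g\,d\mu$. For $\Gamma\subset\Gamma^*$, $\mathrm{Mod}_p(\Gamma)=\inf\int_Xg^p\,dm$ over Borel $g\ge0$ with $\int_\gamma g\ge1$ for all $\gamma\in\Gamma$. A Borel $\rho\ge0$ is a $p$-weak upper gradient of $f$ if $|f(x)-f(y)|\le\int_\gamma\rho$ for all $\gamma\in\Gamma^*$ outside a family of $p$-modulus zero, $x,y$ being the endpoints of $\gamma$. $\tilde N^{1,p}$ is the set of $f\in L^p(m)$ having a $p$-weak upper gradient in $L^p(m)$, and $\|f\|_{N^{1,p}}=\|f\|_{L^p(m)}+\inf_\rho\|\rho\|_{L^p(m)}$, the infimum over all $p$-weak upper gradients $\rho$ of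 $f$. *)

theory Defs
  imports "HOL-Analysis.Analysis"
begin

text \<open>A path is represented as a triple (a, b, gamma) with a \<le> b and gamma continuous
  on [a,b]; only the values of gamma on [a,b] are relevant.\<close>

type_synonym 'a gpath = "real \<times> real \<times> (real \<Rightarrow> 'a)"

definition is_path :: "'a::metric_space gpath \<Rightarrow> bool" where
  "is_path P = (case P of (a, b, \<gamma>) \<Rightarrow> a \<le> b \<and> continuous_on {a..b} \<gamma>)"

definition path_image_g :: "'a gpath \<Rightarrow> 'a set" where
  "path_image_g P = (case P of (a, b, \<gamma>) \<Rightarrow> \<gamma> ` {a..b})"

definition start_pt :: "'a gpath \<Rightarrow> 'a" where
  "start_pt P = (case P of (a, b, \<gamma>) \<Rightarrow> \<gamma> a)"

definition end_pt :: "'a gpath \<Rightarrow> 'a" where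
  "end_pt P = (case P of (a, b, \<gamma>) \<Rightarrow> \<gamma> b)"

definition nontriv_subpaths :: "'a gpath \<Rightarrow> 'a gpath set" where
  "nontriv_subpaths P = (case P of (a, b, \<gamma>) \<Rightarrow> {(c, d, \<gamma>) | c d. a \<le> c \<and> c < d \<and> d \<le> b})"

definition borel_measure :: "'a::metric_space measure \<Rightarrow> bool" where
  "borel_measure M = (sets M = sets borel)"

definition non_atomic :: "'a measure \<Rightarrow> bool" where
  "non_atomic M = (\<forall>x. emeasure M {x} = 0)"

definition Gamma_mu :: "'a::metric_space measure \<Rightarrow> 'a gpath set" where
  "Gamma_mu \<mu> = {P. is_path P \<and> fst P < fst (snd P) \<and> inj_on (snd (snd P)) {fst P..fst (snd P)}
      \<and> (\<forall>Q\<in>nontriv_subpaths P. 0 < emeasure \<mu> (path_image_g Q) \<and> emeasure \<mu> (path_image_g Q) < \<infinity>)}"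

definition line_int :: "'a measure \<Rightarrow> ('a \<Rightarrow> ennreal) \<Rightarrow> 'a gpath \<Rightarrow> ennreal" where
  "line_int \<mu> g P = (\<integral>\<^sup>+ x. g x * indicator (path_image_g P) x \<partial>\<mu>)"

definition enn_powr :: "ennreal \<Rightarrow> real \<Rightarrow> ennreal" where
  "enn_powr x p = (if x = \<infinity> then \<infinity> else ennreal (enn2real x powr p))"

definition p_modulus :: "'a::metric_space measure \<Rightarrow> 'a measure \<Rightarrow> real \<Rightarrow> 'a gpath set \<Rightarrow> ennreal" where
  "p_modulus \<mu> m p \<Gamma> = (INF g \<in> {g. g \<in> borel_measurable borel \<and> (\<forall>P\<in>\<Gamma>. line_int \<mu> g P \<ge> 1)}.
       \<integral>\<^sup>+ x. enn_powr (g x) p \<partial>m)"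

definition p_weak_upper_gradient ::
  "'a::metric_space measure \<Rightarrow> 'a measure \<Rightarrow> real \<Rightarrow> 'a gpath set \<Rightarrow> ('a \<Rightarrow> real) \<Rightarrow> ('a \<Rightarrow> ennreal) \<Rightarrow> bool" where
  "p_weak_upper_gradient \<mu> m p \<Gamma>s f \<rho> =
     (\<rho> \<in> borel_measurable borel \<and>
      (\<exists>E \<subseteq> \<Gamma>s. p_modulus \<mu> m p E = 0 \<and>
         (\<forall>P \<in> \<Gamma>s - E. ennreal \<bar>f (start_pt P) - f (end_pt P)\<bar> \<le> line_int \<mu> \<rho> P)))"

definition Lp_norm :: "'a measure \<Rightarrow> real \<Rightarrow> ('a \<Rightarrow> ennreal) \<Rightarrow> ennreal" where
  "Lp_norm m p g = enn_powr (\<integral>\<^sup>+ x. enn_powr (g x) p \<partial>m) (1 / p)"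

definition in_Lp :: "'a measure \<Rightarrow> real \<Rightarrow> ('a \<Rightarrow> real) \<Rightarrow> bool" where
  "in_Lp m p f = (f \<in> borel_measurable m \<and> (\<integral>\<^sup>+ x. enn_powr (ennreal \<bar>f x\<bar>) p \<partial>m) < \<infinity>)"

definition N1p_tilde :: "'a::metric_space measure \<Rightarrow> 'a measure \<Rightarrow> real \<Rightarrow> 'a gpath set \<Rightarrow> ('a \<Rightarrow> real) set" where
  "N1p_tilde \<mu> m p \<Gamma>s = {f. in_Lp m p f \<and>
      (\<exists>\<rho>. p_weak_upper_gradient \<mu> m p \<Gamma>s f \<rho> \<and> (\<integral>\<^sup>+ x. enn_powr (\<rho> x) p \<partial>m) < \<infinity>)}"

definition N1p_norm :: "'a::metric_space measure \<Rightarrow> 'a measure \<Rightarrow> real \<Rightarrow> 'a gpath set \<Rightarrow> ('a \<Rightarrow> real) \<Rightarrow> ennreal" where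
  "N1p_norm \<mu> m p \<Gamma>s f = Lp_norm m p (\<lambda>x. ennreal \<bar>f x\<bar>)
      + (INF \<rho> \<in> {\<rho>. p_weak_upper_gradient \<mu> m p \<Gamma>s f \<rho>}. Lp_norm m p \<rho>)"

end

theory Submission
  imports Defs
begin


lemma enn_powr_meas[measurable]:
  assumes [measurable]: "g \<in> borel_measurable M"
  shows "(\<lambda>x. enn_powr (g x) p) \<in> borel_measurable M"
  unfolding enn_powr_def by measurable

lemma enn_powr_zero: "0 < p \<Longrightarrow> enn_powr 0 p = 0"
  by (simp add: enn_powr_def)

lemma enn_powr_mono: "0 < p \<Longrightarrow> a \<le> b \<Longrightarrow> enn_powr a p \<le> enn_powr b p"
  unfolding enn_powr_def
  apply (cases a; cases b)
  apply (auto simp: powr_mono2 ennreal_leI top_unique)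
  done

lemma enn_powr_mult: "0 < p \<Longrightarrow> 0 < e \<Longrightarrow> enn_powr (a * ennreal e) p = enn_powr a p * ennreal (e powr p)"
  unfolding enn_powr_def
  apply (cases a)
  apply (auto simp: powr_mult ennreal_mult[symmetric] ennreal_mult_top ennreal_top_mult)
  done


lemma line_int_mono_set:
  "path_image_g Q \<subseteq> path_image_g P \<Longrightarrow> line_int \<mu> g Q \<le> line_int \<mu> g P"
  unfolding line_int_def
  by (intro nn_integral_mono) (auto split: split_indicator)

lemma line_int_mono_fun:
  "(\<And>x. g x \<le> h x) \<Longrightarrow> line_int \<mu> g Q \<le> line_int \<mu> h Q"
  unfolding line_int_def
  by (intro nn_integral_mono) (auto split: split_indicator)

definition mod0 :: "'a::metric_space measure \<Rightarrow> 'a measure \<Rightarrow> real \<Rightarrow> 'a gpath set \<Rightarrow> bool" where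
  "mod0 \<mu> m p E \<longleftrightarrow> (\<forall>\<delta>>0. \<exists>g\<in>borel_measurable borel. (\<forall>P\<in>E. 1 \<le> line_int \<mu> g P)
      \<and> (\<integral>\<^sup>+x. enn_powr (g x) p \<partial>m) < ennreal \<delta>)"

lemma mod0_imp: assumes "p_modulus \<mu> m p E = 0" shows "mod0 \<mu> m p E"
  unfolding mod0_def
proof (intro allI impI)
  fix \<delta> :: real assume "0 < \<delta>"
  then have "p_modulus \<mu> m p E < ennreal \<delta>" using assms by simp
  then show "\<exists>g\<in>borel_measurable borel. (\<forall>P\<in>E. 1 \<le> line_int \<mu> g P)
      \<and> (\<integral>\<^sup>+x. enn_powr (g x) p \<partial>m) < ennreal \<delta>"
    unfolding p_modulus_def by (auto simp: INF_less_iff)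
qed

lemma mod0_p_modulus: assumes "mod0 \<mu> m p E" shows "p_modulus \<mu> m p E = 0"
proof -
  have "p_modulus \<mu> m p E \<le> 0 + ennreal e" if "0 < e" for e
  proof -
    obtain g where g: "g\<in>borel_measurable borel" "\<forall>P\<in>E. 1 \<le> line_int \<mu> g P"
      "(\<integral>\<^sup>+x. enn_powr (g x) p \<partial>m) < ennreal e"
      using assms \<open>0 < e\<close> unfolding mod0_def by blast
    have "p_modulus \<mu> m p E \<le> (\<integral>\<^sup>+x. enn_powr (g x) p \<partial>m)"
      unfolding p_modulus_def using g by (intro INF_lower) auto
    with g(3) show ?thesis by simp
  qed
  then have "p_modulus \<mu> m p E \<le> 0" by (rule ennreal_le_epsilon)
  then show ?thesis by simp
qed

lemma mod0_mono:
  assumes "mod0 \<mu> m p E" "\<And>P. P \<in> A \<Longrightarrow> \<exists>Q\<in>E. path_image_g Q \<subseteq> path_image_g P"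
  shows "mod0 \<mu> m p A"
  unfolding mod0_def
proof (intro allI impI)
  fix \<delta> :: real assume "0 < \<delta>"
  then obtain g where g: "g\<in>borel_measurable borel" "\<forall>P\<in>E. 1 \<le> line_int \<mu> g P"
      "(\<integral>\<^sup>+x. enn_powr (g x) p \<partial>m) < ennreal \<delta>"
      using assms(1) unfolding mod0_def by blast
  have "\<forall>P\<in>A. 1 \<le> line_int \<mu> g P"
  proof
    fix P assume "P \<in> A"
    then obtain Q where "Q \<in> E" "path_image_g Q \<subseteq> path_image_g P" using assms(2) by blast
    then show "1 \<le> line_int \<mu> g P" using g(2) line_int_mono_set[of Q P \<mu> g] by (meson order_trans)
  qed
  with g show "\<exists>g\<in>borel_measurable borel. (\<forall>P\<in>A. 1 \<le> line_int \<mu> g P)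
      \<and> (\<integral>\<^sup>+x. enn_powr (g x) p \<partial>m) < ennreal \<delta>" by blast
qed

lemma mod0_subset: "mod0 \<mu> m p E \<Longrightarrow> A \<subseteq> E \<Longrightarrow> mod0 \<mu> m p A"
  by (erule mod0_mono) auto

lemma mod0_Un:
  assumes "0 < p" "mod0 \<mu> m p E1" "mod0 \<mu> m p E2" and sm: "sets m = sets borel"
  shows "mod0 \<mu> m p (E1 \<union> E2)"
  unfolding mod0_def
proof (intro allI impI)
  fix \<delta> :: real assume "0 < \<delta>"
  then have d2: "0 < \<delta>/2" by simp
  obtain g1 where g1: "g1\<in>borel_measurable borel" "\<forall>P\<in>E1. 1 \<le> line_int \<mu> g1 P"
      "(\<integral>\<^sup>+x. enn_powr (g1 x) p \<partial>m) < ennreal (\<delta>/2)"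
      using assms(2) d2 unfolding mod0_def by blast
  obtain g2 where g2: "g2\<in>borel_measurable borel" "\<forall>P\<in>E2. 1 \<le> line_int \<mu> g2 P"
      "(\<integral>\<^sup>+x. enn_powr (g2 x) p \<partial>m) < ennreal (\<delta>/2)"
      using assms(3) d2 unfolding mod0_def by blast
  define g where "g = (\<lambda>x. max (g1 x) (g2 x))"
  have gm: "g \<in> borel_measurable borel" unfolding g_def using g1(1) g2(1) by measurable
  have "\<forall>P\<in>E1 \<union> E2. 1 \<le> line_int \<mu> g P"
  proof
    fix P assume "P \<in> E1 \<union> E2"
    then show "1 \<le> line_int \<mu> g P"
    proof
      assume "P \<in> E1"
      then show ?thesis using g1(2) line_int_mono_fun[of g1 g \<mu> P] unfolding g_def
        by (meson max.cobounded1 order_trans)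
    next
      assume "P \<in> E2"
      then show ?thesis using g2(2) line_int_mono_fun[of g2 g \<mu> P] unfolding g_def
        by (meson max.cobounded2 order_trans)
    qed
  qed
  moreover have "(\<integral>\<^sup>+x. enn_powr (g x) p \<partial>m) < ennreal \<delta>"
  proof -
    have "(\<integral>\<^sup>+x. enn_powr (g x) p \<partial>m) \<le> (\<integral>\<^sup>+x. enn_powr (g1 x) p + enn_powr (g2 x) p \<partial>m)"
      by (intro nn_integral_mono) (auto simp: g_def max_def add_increasing add_increasing2)
    also have "\<dots> \<le> (\<integral>\<^sup>+x. enn_powr (g1 x) p \<partial>m) + (\<integral>\<^sup>+x. enn_powr (g2 x) p \<partial>m)"
      using g1(1) g2(1) by (subst nn_integral_add) (auto simp: measurable_cong_sets[OF sm refl])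
    also have "\<dots> < ennreal (\<delta>/2) + ennreal (\<delta>/2)"
      using g1(3) g2(3) by (rule add_strict_mono)
    also have "\<dots> = ennreal \<delta>" using \<open>0<\<delta>\<close> by (simp flip: ennreal_plus)
    finally show ?thesis .
  qed
  ultimately show "\<exists>g\<in>borel_measurable borel. (\<forall>P\<in>E1 \<union> E2. 1 \<le> line_int \<mu> g P)
      \<and> (\<integral>\<^sup>+x. enn_powr (g x) p \<partial>m) < ennreal \<delta>" using gm by blast
qed


lemma path_image_sets:
  assumes "sets \<mu> = sets borel" "is_path P"
  shows "path_image_g P \<in> sets \<mu>"
proof -
  obtain a b \<gamma> where P: "P = (a, b, \<gamma>)" by (cases P) auto
  have "compact (\<gamma> ` {a..b})" using assms(2) unfolding P is_path_def
    by (auto intro: compact_continuous_image)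
  then have "closed (path_image_g P)" unfolding P path_image_g_def by (auto intro: compact_imp_closed)
  then show ?thesis using assms(1) by simp
qed

lemma mod0_null:
  assumes sm: "sets \<mu> = sets borel" and smm: "sets m = sets borel" and p: "0 < p"
    and N: "N \<in> sets borel" and mN: "emeasure m N = 0"
  shows "mod0 \<mu> m p {P. is_path P \<and> emeasure \<mu> (path_image_g P \<inter> N) \<noteq> 0}"
  unfolding mod0_def
proof (intro allI impI)
  fix \<delta> :: real assume d: "0 < \<delta>"
  define g where "g = (\<lambda>x. \<infinity> * indicator N x :: ennreal)"
  have gm: "g \<in> borel_measurable borel" unfolding g_def using N by measurable
  have "\<forall>P\<in>{P. is_path P \<and> emeasure \<mu> (path_image_g P \<inter> N) \<noteq> 0}. 1 \<le> line_int \<mu> g P"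
  proof
    fix P assume "P \<in> {P. is_path P \<and> emeasure \<mu> (path_image_g P \<inter> N) \<noteq> 0}"
    then have P: "is_path P" "emeasure \<mu> (path_image_g P \<inter> N) \<noteq> 0" by auto
    have S: "path_image_g P \<inter> N \<in> sets \<mu>" using path_image_sets[OF sm P(1)] N sm by auto
    have "line_int \<mu> g P = (\<integral>\<^sup>+x. \<infinity> * indicator (path_image_g P \<inter> N) x \<partial>\<mu>)"
      unfolding line_int_def g_def by (intro nn_integral_cong) (auto split: split_indicator)
    also have "\<dots> = \<infinity>" using P(2) by (simp only: nn_integral_cmult_indicator[OF S]) (simp add: ennreal_top_mult)
    finally show "1 \<le> line_int \<mu> g P" by simp
  qed
  moreover have "(\<integral>\<^sup>+x. enn_powr (g x) p \<partial>m) = 0"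
  proof -
    have "(\<integral>\<^sup>+x. enn_powr (g x) p \<partial>m) = (\<integral>\<^sup>+x. \<infinity> * indicator N x \<partial>m)"
      unfolding g_def using p by (intro nn_integral_cong) (auto split: split_indicator simp: enn_powr_def)
    also have "\<dots> = 0" using N smm mN by (simp add: nn_integral_cmult_indicator)
    finally show ?thesis .
  qed
  ultimately show "\<exists>g\<in>borel_measurable borel. (\<forall>P\<in>{P. is_path P \<and> emeasure \<mu> (path_image_g P \<inter> N) \<noteq> 0}. 1 \<le> line_int \<mu> g P)
      \<and> (\<integral>\<^sup>+x. enn_powr (g x) p \<partial>m) < ennreal \<delta>" using gm d by (intro bexI[of _ g]) auto
qed

lemma mod0_inf:
  assumes sm: "sets \<mu> = sets borel" and smm: "sets m = sets borel" and p: "0 < p"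
    and \<rho>: "\<rho> \<in> borel_measurable borel" and fin: "(\<integral>\<^sup>+x. enn_powr (\<rho> x) p \<partial>m) < \<infinity>"
  shows "mod0 \<mu> m p {P. is_path P \<and> line_int \<mu> \<rho> P = \<infinity>}"
  unfolding mod0_def
proof (intro allI impI)
  fix \<delta> :: real assume d: "0 < \<delta>"
  obtain Ir where Ir: "(\<integral>\<^sup>+x. enn_powr (\<rho> x) p \<partial>m) = ennreal Ir" "0 \<le> Ir"
    using fin by (cases "(\<integral>\<^sup>+x. enn_powr (\<rho> x) p \<partial>m)") auto
  define e where "e = (\<delta>/(Ir+1)) powr (1/p)"
  have e: "0 < e" unfolding e_def using d Ir(2) by simp
  have ep: "e powr p = \<delta>/(Ir+1)" unfolding e_def using d Ir(2) p by (simp add: powr_powr)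
  define g where "g = (\<lambda>x. \<rho> x * ennreal e)"
  have gm: "g \<in> borel_measurable borel" unfolding g_def using \<rho> by measurable
  have \<rho>m: "\<rho> \<in> borel_measurable \<mu>" "\<rho> \<in> borel_measurable m"
    using \<rho> by (auto simp: measurable_cong_sets[OF sm refl] measurable_cong_sets[OF smm refl])
  have "\<forall>P\<in>{P. is_path P \<and> line_int \<mu> \<rho> P = \<infinity>}. 1 \<le> line_int \<mu> g P"
  proof
    fix P assume "P \<in> {P. is_path P \<and> line_int \<mu> \<rho> P = \<infinity>}"
    then have P: "is_path P" "line_int \<mu> \<rho> P = \<infinity>" by auto
    have S: "path_image_g P \<in> sets \<mu>" using path_image_sets[OF sm P(1)] .
    have "line_int \<mu> g P = (\<integral>\<^sup>+x. (\<rho> x * indicator (path_image_g P) x) * ennreal e \<partial>\<mu>)"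
      unfolding line_int_def g_def by (intro nn_integral_cong) (auto simp: mult_ac)
    also have "\<dots> = line_int \<mu> \<rho> P * ennreal e"
      unfolding line_int_def using S \<rho>m by (subst nn_integral_multc) auto
    also have "\<dots> = \<infinity>" using P(2) e by (simp add: ennreal_top_mult)
    finally show "1 \<le> line_int \<mu> g P" by simp
  qed
  moreover have "(\<integral>\<^sup>+x. enn_powr (g x) p \<partial>m) < ennreal \<delta>"
  proof -
    have "(\<integral>\<^sup>+x. enn_powr (g x) p \<partial>m) = (\<integral>\<^sup>+x. enn_powr (\<rho> x) p * ennreal (e powr p) \<partial>m)"
      unfolding g_def using p e by (simp add: enn_powr_mult)
    also have "\<dots> = ennreal Ir * ennreal (\<delta>/(Ir+1))"
      using \<rho>m Ir ep by (subst nn_integral_multc) auto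
    also have "\<dots> = ennreal (Ir * (\<delta>/(Ir+1)))" using Ir d by (subst ennreal_mult[symmetric]) auto
    also have "\<dots> < ennreal \<delta>"
    proof (rule ennreal_lessI[OF d])
      have "Ir * (\<delta>/(Ir+1)) = \<delta> * (Ir/(Ir+1))" by simp
      also have "\<dots> < \<delta> * 1" using d Ir(2) by (intro mult_strict_left_mono) auto
      finally show "Ir * (\<delta>/(Ir+1)) < \<delta>" by simp
    qed
    finally show ?thesis .
  qed
  ultimately show "\<exists>g\<in>borel_measurable borel. (\<forall>P\<in>{P. is_path P \<and> line_int \<mu> \<rho> P = \<infinity>}. 1 \<le> line_int \<mu> g P)
      \<and> (\<integral>\<^sup>+x. enn_powr (g x) p \<partial>m) < ennreal \<delta>" using gm by auto
qed


lemma shrink_zero: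
  fixes \<rho> :: "'a::metric_space \<Rightarrow> ennreal" and S :: "nat \<Rightarrow> 'a set"
  assumes sm: "sets \<mu> = sets borel" and \<rho>: "\<rho> \<in> borel_measurable borel"
    and Sm: "\<And>n. S n \<in> sets \<mu>" and dec: "\<And>n. S (Suc n) \<subseteq> S n"
    and int: "(\<Inter>n. S n) = {x}" and mx: "emeasure \<mu> {x} = 0"
    and fin: "(\<integral>\<^sup>+y. \<rho> y * indicator (S 0) y \<partial>\<mu>) < \<infinity>"
    and A: "\<And>n. c \<le> (\<integral>\<^sup>+y. \<rho> y * indicator (S n) y \<partial>\<mu>)"
  shows "c = 0"
proof -
  have \<rho>m: "\<rho> \<in> borel_measurable \<mu>" using \<rho> by (simp add: measurable_cong_sets[OF sm refl])
  have "(\<integral>\<^sup>+y. (INF n. \<rho> y * indicator (S n) y) \<partial>\<mu>) = (INF n. (\<integral>\<^sup>+y. \<rho> y * indicator (S n) y \<partial>\<mu>))"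
  proof (rule nn_integral_monotone_convergence_INF_AE[where i=0])
    show "\<And>i. AE y in \<mu>. \<rho> y * indicator (S (Suc i)) y \<le> \<rho> y * indicator (S i) y"
      using dec by (auto split: split_indicator)
    show "\<And>i. (\<lambda>y. \<rho> y * indicator (S i) y) \<in> borel_measurable \<mu>"
      using \<rho>m Sm by measurable
  qed (use fin in auto)
  moreover have "(\<integral>\<^sup>+y. (INF n. \<rho> y * indicator (S n) y) \<partial>\<mu>) = (\<integral>\<^sup>+y. \<rho> x * indicator {x} y \<partial>\<mu>)"
  proof (intro nn_integral_cong)
    fix y
    show "(INF n. \<rho> y * indicator (S n) y) = \<rho> x * indicator {x} y"
    proof (cases "y = x")
      case True
      then have "\<And>n. y \<in> S n" using int by blast
      then show ?thesis using True by simp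
    next
      case False
      then obtain n where "y \<notin> S n" using int by blast
      then have "(INF n. \<rho> y * indicator (S n) y) \<le> 0"
        by (intro INF_lower2[of n]) auto
      then show ?thesis using False by simp
    qed
  qed
  moreover have "(\<integral>\<^sup>+y. \<rho> x * indicator {x} y \<partial>\<mu>) = 0"
    using mx sm by (subst nn_integral_cmult_indicator) auto
  ultimately have "(INF n. (\<integral>\<^sup>+y. \<rho> y * indicator (S n) y \<partial>\<mu>)) = 0" by simp
  moreover have "c \<le> (INF n. (\<integral>\<^sup>+y. \<rho> y * indicator (S n) y \<partial>\<mu>))"
    using A by (rule INF_greatest)
  ultimately show ?thesis by simp
qed


lemma image_sets:
  fixes a b c d :: real and \<gamma> :: "real \<Rightarrow> 'a::metric_space"
  assumes "sets \<mu> = sets borel" "continuous_on {a..b} \<gamma>" "a \<le> c" "d \<le> b"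
  shows "\<gamma> ` {c..d} \<in> sets \<mu>"
proof -
  have "continuous_on {c..d} \<gamma>" by (rule continuous_on_subset[OF assms(2)]) (use assms in auto)
  then have "compact (\<gamma> ` {c..d})" by (auto intro: compact_continuous_image)
  then show ?thesis using assms(1) by (simp add: compact_imp_closed)
qed

lemma start_zero:
  fixes \<gamma> :: "real \<Rightarrow> 'a::metric_space" and h :: "'a \<Rightarrow> real"
  assumes sm: "sets \<mu> = sets borel" and na: "\<And>x. emeasure \<mu> {x} = 0"
    and \<rho>: "\<rho> \<in> borel_measurable borel"
    and ab: "a < b" and cont: "continuous_on {a..b} \<gamma>" and inj: "inj_on \<gamma> {a..b}"
    and pos: "\<And>c d. a \<le> c \<Longrightarrow> c < d \<Longrightarrow> d \<le> b \<Longrightarrow> 0 < emeasure \<mu> (\<gamma> ` {c..d})"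
    and Nm: "N \<in> sets borel" and N: "\<And>y. y \<notin> N \<Longrightarrow> h y = 0"
    and null: "emeasure \<mu> (\<gamma> ` {a..b} \<inter> N) = 0"
    and fin: "(\<integral>\<^sup>+y. \<rho> y * indicator (\<gamma> ` {a..b}) y \<partial>\<mu>) < \<infinity>"
    and ug: "\<And>c d. a \<le> c \<Longrightarrow> c < d \<Longrightarrow> d \<le> b \<Longrightarrow>
        ennreal \<bar>h (\<gamma> c) - h (\<gamma> d)\<bar> \<le> (\<integral>\<^sup>+y. \<rho> y * indicator (\<gamma> ` {c..d}) y \<partial>\<mu>)"
  shows "h (\<gamma> a) = 0"
proof -
  define t where "t n = a + (b - a) / (real n + 2)" for n :: nat
  have t: "a < t n" "t n \<le> b" for n
  proof -
    have "(b - a) / (real n + 2) \<le> (b - a) / 1" using ab by (intro divide_left_mono) auto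
    moreover have "0 < (b - a) / (real n + 2)" using ab by simp
    ultimately show "a < t n" "t n \<le> b" unfolding t_def by auto
  qed
  have tdec: "t (Suc n) \<le> t n" for n
    using ab unfolding t_def by (auto intro!: divide_left_mono)
  define S where "S n = \<gamma> ` {a..t n}" for n
  have Sm: "S n \<in> sets \<mu>" for n unfolding S_def using image_sets[OF sm cont, of a "t n"] t[of n] by auto
  have dec: "S (Suc n) \<subseteq> S n" for n unfolding S_def using tdec[of n] by auto
  have int: "(\<Inter>n. S n) = {\<gamma> a}"
  proof
    show "{\<gamma> a} \<subseteq> (\<Inter>n. S n)" unfolding S_def using t by (auto intro!: imageI less_imp_le)
  next
    show "(\<Inter>n. S n) \<subseteq> {\<gamma> a}"
    proof
      fix y assume y: "y \<in> (\<Inter>n. S n)"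
      then obtain s0 where s0: "s0 \<in> {a..t 0}" "y = \<gamma> s0" unfolding S_def by blast
      have s0le: "s0 \<le> t n" for n
      proof -
        obtain s where s: "s \<in> {a..t n}" "y = \<gamma> s" using y unfolding S_def by blast
        have "s = s0" using inj s s0 t[of n] t[of 0] unfolding inj_on_def by auto
        then show ?thesis using s by auto
      qed
      have "s0 \<le> a"
      proof (rule ccontr)
        assume "\<not> s0 \<le> a"
        then have pos0: "0 < s0 - a" by simp
        obtain n :: nat where n: "(b - a) / (s0 - a) < real n" using reals_Archimedean2 by blast
        then have "b - a < real n * (s0 - a)" using pos0 by (simp add: field_simps)
        also have "\<dots> \<le> (real n + 2) * (s0 - a)" using pos0 by (intro mult_right_mono) auto
        finally have "(b - a) / (real n + 2) < s0 - a" by (simp add: field_simps)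
        then show False using s0le[of n] unfolding t_def by simp
      qed
      then show "y \<in> {\<gamma> a}" using s0 by auto
    qed
  qed
  have fin0: "(\<integral>\<^sup>+y. \<rho> y * indicator (S 0) y \<partial>\<mu>) < \<infinity>"
  proof -
    have "(\<integral>\<^sup>+y. \<rho> y * indicator (S 0) y \<partial>\<mu>) \<le> (\<integral>\<^sup>+y. \<rho> y * indicator (\<gamma> ` {a..b}) y \<partial>\<mu>)"
      unfolding S_def using t[of 0] by (intro nn_integral_mono) (auto split: split_indicator)
    then show ?thesis using fin by (simp add: le_less_trans)
  qed
  have A: "ennreal \<bar>h (\<gamma> a)\<bar> \<le> (\<integral>\<^sup>+y. \<rho> y * indicator (S n) y \<partial>\<mu>)" for n
  proof -
    have "\<not> S n \<subseteq> N"
    proof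
      assume "S n \<subseteq> N"
      then have "S n \<subseteq> \<gamma> ` {a..b} \<inter> N" unfolding S_def using t[of n] by auto
      moreover have "\<gamma> ` {a..b} \<inter> N \<in> sets \<mu>" using image_sets[OF sm cont, of a b] Nm sm by auto
      ultimately have "emeasure \<mu> (S n) \<le> 0" using null by (metis emeasure_mono)
      moreover have "0 < emeasure \<mu> (S n)" unfolding S_def using pos[of a "t n"] t[of n] by auto
      ultimately show False by simp
    qed
    then obtain s where s: "s \<in> {a..t n}" "\<gamma> s \<notin> N" unfolding S_def by blast
    then have hs: "h (\<gamma> s) = 0" using N by auto
    show ?thesis
    proof (cases "s = a")
      case True
      then show ?thesis using hs by simp
    next
      case False
      then have "a < s" using s by auto
      then have "ennreal \<bar>h (\<gamma> a) - h (\<gamma> s)\<bar> \<le> (\<integral>\<^sup>+y. \<rho> y * indicator (\<gamma> ` {a..s}) y \<partial>\<mu>)"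
        using ug[of a s] s t[of n] by auto
      also have "\<dots> \<le> (\<integral>\<^sup>+y. \<rho> y * indicator (S n) y \<partial>\<mu>)"
        unfolding S_def using s by (intro nn_integral_mono) (auto split: split_indicator)
      finally show ?thesis using hs by simp
    qed
  qed
  have "ennreal \<bar>h (\<gamma> a)\<bar> = 0"
    by (rule shrink_zero[OF sm \<rho> Sm dec int na fin0 A])
  then show ?thesis by simp
qed


lemma rev_image: "(\<lambda>t. \<gamma> (- t)) ` {c..d} = \<gamma> ` {-d..-(c::real)}"
proof -
  have "(\<lambda>t. \<gamma> (- t)) ` {c..d} = \<gamma> ` (uminus ` {c..d})" by (rule image_image[symmetric])
  then show ?thesis by simp
qed

lemma end_zero:
  fixes \<gamma> :: "real \<Rightarrow> 'a::metric_space" and h :: "'a \<Rightarrow> real"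
  assumes sm: "sets \<mu> = sets borel" and na: "\<And>x. emeasure \<mu> {x} = 0"
    and \<rho>: "\<rho> \<in> borel_measurable borel"
    and ab: "a < b" and cont: "continuous_on {a..b} \<gamma>" and inj: "inj_on \<gamma> {a..b}"
    and pos: "\<And>c d. a \<le> c \<Longrightarrow> c < d \<Longrightarrow> d \<le> b \<Longrightarrow> 0 < emeasure \<mu> (\<gamma> ` {c..d})"
    and Nm: "N \<in> sets borel" and N: "\<And>y. y \<notin> N \<Longrightarrow> h y = 0"
    and null: "emeasure \<mu> (\<gamma> ` {a..b} \<inter> N) = 0"
    and fin: "(\<integral>\<^sup>+y. \<rho> y * indicator (\<gamma> ` {a..b}) y \<partial>\<mu>) < \<infinity>"
    and ug: "\<And>c d. a \<le> c \<Longrightarrow> c < d \<Longrightarrow> d \<le> b \<Longrightarrow>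
        ennreal \<bar>h (\<gamma> c) - h (\<gamma> d)\<bar> \<le> (\<integral>\<^sup>+y. \<rho> y * indicator (\<gamma> ` {c..d}) y \<partial>\<mu>)"
  shows "h (\<gamma> b) = 0"
proof -
  have "h ((\<lambda>t. \<gamma> (- t)) (-b)) = 0"
  proof (rule start_zero[OF sm na \<rho>, where N=N and \<gamma>="\<lambda>t. \<gamma> (- t)" and a="-b" and b="-a"])
    show "- b < - a" using ab by simp
    show "continuous_on {- b..- a} (\<lambda>t. \<gamma> (- t))"
      by (rule continuous_on_compose2[OF cont]) (auto intro!: continuous_intros)
    show "inj_on (\<lambda>t. \<gamma> (- t)) {- b..- a}"
      using inj unfolding inj_on_def by force
    show "\<And>c d. - b \<le> c \<Longrightarrow> c < d \<Longrightarrow> d \<le> - a \<Longrightarrow> 0 < emeasure \<mu> ((\<lambda>t. \<gamma> (- t)) ` {c..d})"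
      unfolding rev_image by (rule pos) auto
    show "N \<in> sets borel" by fact
    show "\<And>y. y \<notin> N \<Longrightarrow> h y = 0" by fact
    show "emeasure \<mu> ((\<lambda>t. \<gamma> (- t)) ` {- b..- a} \<inter> N) = 0"
      unfolding rev_image using null by simp
    show "(\<integral>\<^sup>+y. \<rho> y * indicator ((\<lambda>t. \<gamma> (- t)) ` {- b..- a}) y \<partial>\<mu>) < \<infinity>"
      unfolding rev_image using fin by simp
    show "ennreal \<bar>h (\<gamma> (- c)) - h (\<gamma> (- d))\<bar> \<le> (\<integral>\<^sup>+y. \<rho> y * indicator ((\<lambda>t. \<gamma> (- t)) ` {c..d}) y \<partial>\<mu>)"
      if "- b \<le> c" "c < d" "d \<le> - a" for c d
      unfolding rev_image using ug[of "-d" "-c"] that by (simp add: abs_minus_commute)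
  qed
  then show ?thesis by simp
qed


lemma subpath_image: "Q \<in> nontriv_subpaths P \<Longrightarrow> path_image_g Q \<subseteq> path_image_g P"
  by (cases P) (auto simp: nontriv_subpaths_def path_image_g_def)

lemma line_int_add:
  assumes sm: "sets \<mu> = sets borel" and Q: "is_path Q"
    and f: "\<rho>f \<in> borel_measurable borel" and g: "\<rho>g \<in> borel_measurable borel"
  shows "line_int \<mu> (\<lambda>x. \<rho>f x + \<rho>g x) Q = line_int \<mu> \<rho>f Q + line_int \<mu> \<rho>g Q"
proof -
  have S: "path_image_g Q \<in> sets \<mu>" by (rule path_image_sets[OF sm Q])
  have m: "\<rho>f \<in> borel_measurable \<mu>" "\<rho>g \<in> borel_measurable \<mu>"
    using f g by (auto simp: measurable_cong_sets[OF sm refl])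
  have "line_int \<mu> (\<lambda>x. \<rho>f x + \<rho>g x) Q =
     (\<integral>\<^sup>+x. \<rho>f x * indicator (path_image_g Q) x + \<rho>g x * indicator (path_image_g Q) x \<partial>\<mu>)"
    unfolding line_int_def by (intro nn_integral_cong) (simp add: distrib_right)
  also have "\<dots> = line_int \<mu> \<rho>f Q + line_int \<mu> \<rho>g Q"
    unfolding line_int_def using S m by (subst nn_integral_add) auto
  finally show ?thesis .
qed

theorem corollary4p1:
  fixes \<mu> m :: "'a::metric_space measure" and p :: real and \<Gamma>s :: "'a gpath set"
    and f g :: "'a \<Rightarrow> real"
  assumes "borel_measure \<mu>" and "non_atomic \<mu>" and "borel_measure m"
    and "0 < p"
    and "\<Gamma>s \<subseteq> Gamma_mu \<mu>"
    and "\<And>P Q. P \<in> \<Gamma>s \<Longrightarrow> Q \<in> nontriv_subpaths P \<Longrightarrow> Q \<in> \<Gamma>s"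
    and "\<And>x y. x \<noteq> y \<Longrightarrow> \<exists>P\<in>\<Gamma>s. start_pt P = x \<and> end_pt P = y"
    and "f \<in> N1p_tilde \<mu> m p \<Gamma>s" and "g \<in> N1p_tilde \<mu> m p \<Gamma>s"
    and "AE x in m. f x = g x"
  shows "N1p_norm \<mu> m p \<Gamma>s (\<lambda>x. f x - g x) = 0"
proof -
  note p = assms(4)
  have sm: "sets \<mu> = sets borel" using assms(1) by (simp add: borel_measure_def)
  have smm: "sets m = sets borel" using assms(3) by (simp add: borel_measure_def)
  have na: "\<And>x. emeasure \<mu> {x} = 0" using assms(2) by (simp add: non_atomic_def)
  obtain \<rho>f Ef where f: "in_Lp m p f" "\<rho>f \<in> borel_measurable borel" "Ef \<subseteq> \<Gamma>s"
      "p_modulus \<mu> m p Ef = 0"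
      "\<And>P. P \<in> \<Gamma>s - Ef \<Longrightarrow> ennreal \<bar>f (start_pt P) - f (end_pt P)\<bar> \<le> line_int \<mu> \<rho>f P"
      "(\<integral>\<^sup>+ x. enn_powr (\<rho>f x) p \<partial>m) < \<infinity>"
    using assms(8) unfolding N1p_tilde_def p_weak_upper_gradient_def by blast
  obtain \<rho>g Eg where g: "in_Lp m p g" "\<rho>g \<in> borel_measurable borel" "Eg \<subseteq> \<Gamma>s"
      "p_modulus \<mu> m p Eg = 0"
      "\<And>P. P \<in> \<Gamma>s - Eg \<Longrightarrow> ennreal \<bar>g (start_pt P) - g (end_pt P)\<bar> \<le> line_int \<mu> \<rho>g P"
      "(\<integral>\<^sup>+ x. enn_powr (\<rho>g x) p \<partial>m) < \<infinity>"
    using assms(9) unfolding N1p_tilde_def p_weak_upper_gradient_def by blast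
  have fm[measurable]: "f \<in> borel_measurable borel"
    using f(1) by (simp add: in_Lp_def measurable_cong_sets[OF smm refl])
  have gm[measurable]: "g \<in> borel_measurable borel"
    using g(1) by (simp add: in_Lp_def measurable_cong_sets[OF smm refl])
  define h where "h = (\<lambda>x. f x - g x)"
  define N where "N = {x. f x \<noteq> g x}"
  have "{x\<in>space borel. f x \<noteq> g x} \<in> sets borel" by measurable
  then have Nm: "N \<in> sets borel" unfolding N_def by simp
  have spm: "space m = UNIV" using sets_eq_imp_space_eq[OF smm] by simp
  have mN: "emeasure m N = 0"
    using assms(10) Nm smm spm by (subst (asm) AE_iff_measurable[of N]) (auto simp: N_def)
  have hN: "\<And>y. y \<notin> N \<Longrightarrow> h y = 0" unfolding N_def h_def by auto
  define \<rho> where "\<rho> = (\<lambda>x. \<rho>f x + \<rho>g x)"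
  have \<rho>m: "\<rho> \<in> borel_measurable borel" unfolding \<rho>_def using f(2) g(2) by measurable
  define E where "E = \<Gamma>s \<inter> ({P. \<exists>Q\<in>nontriv_subpaths P. Q \<in> Ef} \<union> {P. \<exists>Q\<in>nontriv_subpaths P. Q \<in> Eg}
     \<union> {P. is_path P \<and> emeasure \<mu> (path_image_g P \<inter> N) \<noteq> 0}
     \<union> {P. is_path P \<and> line_int \<mu> \<rho>f P = \<infinity>} \<union> {P. is_path P \<and> line_int \<mu> \<rho>g P = \<infinity>})"
  have m1: "mod0 \<mu> m p {P. \<exists>Q\<in>nontriv_subpaths P. Q \<in> Ef}"
    using mod0_imp[OF f(4)] by (rule mod0_mono) (auto dest: subpath_image)
  have m2: "mod0 \<mu> m p {P. \<exists>Q\<in>nontriv_subpaths P. Q \<in> Eg}"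
    using mod0_imp[OF g(4)] by (rule mod0_mono) (auto dest: subpath_image)
  have m3: "mod0 \<mu> m p {P. is_path P \<and> emeasure \<mu> (path_image_g P \<inter> N) \<noteq> 0}"
    by (rule mod0_null[OF sm smm p Nm mN])
  have m4: "mod0 \<mu> m p {P. is_path P \<and> line_int \<mu> \<rho>f P = \<infinity>}"
    by (rule mod0_inf[OF sm smm p f(2) f(6)])
  have m5: "mod0 \<mu> m p {P. is_path P \<and> line_int \<mu> \<rho>g P = \<infinity>}"
    by (rule mod0_inf[OF sm smm p g(2) g(6)])
  have mU: "mod0 \<mu> m p ({P. \<exists>Q\<in>nontriv_subpaths P. Q \<in> Ef} \<union> {P. \<exists>Q\<in>nontriv_subpaths P. Q \<in> Eg}
     \<union> {P. is_path P \<and> emeasure \<mu> (path_image_g P \<inter> N) \<noteq> 0}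
     \<union> {P. is_path P \<and> line_int \<mu> \<rho>f P = \<infinity>} \<union> {P. is_path P \<and> line_int \<mu> \<rho>g P = \<infinity>})"
    by (intro mod0_Un[OF p _ _ smm] m1 m2 m3 m4 m5)
  have mE: "p_modulus \<mu> m p E = 0"
    by (rule mod0_p_modulus, rule mod0_subset[OF mU]) (auto simp: E_def)
  have zero_ends: "h (start_pt P) = 0 \<and> h (end_pt P) = 0" if P: "P \<in> \<Gamma>s - E" for P
  proof -
    obtain a b \<gamma> where Pe: "P = (a, b, \<gamma>)" by (cases P) auto
    have PG: "P \<in> Gamma_mu \<mu>" using P assms(5) by auto
    have PG': "is_path P" "fst P < fst (snd P)" "inj_on (snd (snd P)) {fst P..fst (snd P)}"
      "\<forall>Q\<in>nontriv_subpaths P. 0 < emeasure \<mu> (path_image_g Q) \<and> emeasure \<mu> (path_image_g Q) < \<infinity>"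
      using PG unfolding Gamma_mu_def mem_Collect_eq by blast+
    have isP: "is_path P" by (rule PG'(1))
    have ab: "a < b" using PG'(2) by (simp add: Pe)
    have inj: "inj_on \<gamma> {a..b}" using PG'(3) by (simp add: Pe)
    have cont: "continuous_on {a..b} \<gamma>" using isP by (simp add: Pe is_path_def)
    have sub: "(c, d, \<gamma>) \<in> nontriv_subpaths P" if "a \<le> c" "c < d" "d \<le> b" for c d
      using that unfolding Pe nontriv_subpaths_def by auto
    have pos: "0 < emeasure \<mu> (\<gamma> ` {c..d})" if "a \<le> c" "c < d" "d \<le> b" for c d
    proof -
      have "0 < emeasure \<mu> (path_image_g (c, d, \<gamma>))" using PG'(4) sub[OF that] by blast
      then show ?thesis by (simp add: path_image_g_def)
    qed
    have PG2: "P \<in> \<Gamma>s" "P \<notin> E" using P by simp_all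
    have nE: "\<not> (\<exists>Q\<in>nontriv_subpaths P. Q \<in> Ef)" "\<not> (\<exists>Q\<in>nontriv_subpaths P. Q \<in> Eg)"
      "\<not> (is_path P \<and> emeasure \<mu> (path_image_g P \<inter> N) \<noteq> 0)"
      "\<not> (is_path P \<and> line_int \<mu> \<rho>f P = \<infinity>)" "\<not> (is_path P \<and> line_int \<mu> \<rho>g P = \<infinity>)"
      using PG2 unfolding E_def by (simp_all only: Int_iff Un_iff mem_Collect_eq simp_thms de_Morgan_disj)
    have null: "emeasure \<mu> (\<gamma> ` {a..b} \<inter> N) = 0"
      using nE(3) isP by (simp add: Pe path_image_g_def)
    have fin: "(\<integral>\<^sup>+y. \<rho> y * indicator (\<gamma> ` {a..b}) y \<partial>\<mu>) < \<infinity>"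
    proof -
      have "(\<integral>\<^sup>+y. \<rho> y * indicator (\<gamma> ` {a..b}) y \<partial>\<mu>) = line_int \<mu> \<rho>f P + line_int \<mu> \<rho>g P"
        using line_int_add[OF sm isP f(2) g(2)] by (simp add: line_int_def \<rho>_def Pe path_image_g_def)
      moreover have "line_int \<mu> \<rho>f P \<noteq> \<infinity>" "line_int \<mu> \<rho>g P \<noteq> \<infinity>" using nE(4,5) isP by auto
      ultimately show ?thesis by (simp add: less_top)
    qed
    have ug: "ennreal \<bar>h (\<gamma> c) - h (\<gamma> d)\<bar> \<le> (\<integral>\<^sup>+y. \<rho> y * indicator (\<gamma> ` {c..d}) y \<partial>\<mu>)"
      if cd: "a \<le> c" "c < d" "d \<le> b" for c d
    proof -
      define Q where "Q = (c, d, \<gamma>)"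
      have QS: "Q \<in> nontriv_subpaths P" unfolding Q_def by (rule sub[OF cd])
      have QG: "Q \<in> \<Gamma>s" using assms(6)[OF _ QS] P by simp
      have Qf: "Q \<notin> Ef" "Q \<notin> Eg" using nE(1,2) QS by auto
      have "Q \<in> Gamma_mu \<mu>" using QG assms(5) by (rule subsetD[rotated])
      then have isQ: "is_path Q" by (simp add: Gamma_mu_def)
      have QE: "Q \<in> \<Gamma>s - Ef" "Q \<in> \<Gamma>s - Eg" using QG Qf by simp_all
      have fQ: "ennreal \<bar>f (\<gamma> c) - f (\<gamma> d)\<bar> \<le> line_int \<mu> \<rho>f Q"
        using f(5)[OF QE(1)] by (simp add: Q_def start_pt_def end_pt_def)
      have gQ: "ennreal \<bar>g (\<gamma> c) - g (\<gamma> d)\<bar> \<le> line_int \<mu> \<rho>g Q"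
        using g(5)[OF QE(2)] by (simp add: Q_def start_pt_def end_pt_def)
      have "h (\<gamma> c) - h (\<gamma> d) = (f (\<gamma> c) - f (\<gamma> d)) - (g (\<gamma> c) - g (\<gamma> d))"
        unfolding h_def by simp
      then have "\<bar>h (\<gamma> c) - h (\<gamma> d)\<bar> \<le> \<bar>f (\<gamma> c) - f (\<gamma> d)\<bar> + \<bar>g (\<gamma> c) - g (\<gamma> d)\<bar>"
        by (simp only: abs_triangle_ineq4)
      then have "ennreal \<bar>h (\<gamma> c) - h (\<gamma> d)\<bar> \<le> ennreal (\<bar>f (\<gamma> c) - f (\<gamma> d)\<bar> + \<bar>g (\<gamma> c) - g (\<gamma> d)\<bar>)"
        by (rule ennreal_leI)
      also have "\<dots> = ennreal \<bar>f (\<gamma> c) - f (\<gamma> d)\<bar> + ennreal \<bar>g (\<gamma> c) - g (\<gamma> d)\<bar>"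
        by (rule ennreal_plus) auto
      also have "\<dots> \<le> line_int \<mu> \<rho>f Q + line_int \<mu> \<rho>g Q"
        using fQ gQ by (rule add_mono)
      also have "\<dots> = (\<integral>\<^sup>+y. \<rho> y * indicator (\<gamma> ` {c..d}) y \<partial>\<mu>)"
        using line_int_add[OF sm isQ f(2) g(2)] by (simp add: line_int_def \<rho>_def Q_def path_image_g_def)
      finally show ?thesis .
    qed
    have "h (\<gamma> a) = 0"
      by (rule start_zero[OF sm na \<rho>m ab cont inj pos Nm hN null fin ug])
    moreover have "h (\<gamma> b) = 0"
      by (rule end_zero[OF sm na \<rho>m ab cont inj pos Nm hN null fin ug])
    ultimately show ?thesis by (simp add: Pe start_pt_def end_pt_def)
  qed
  have wug: "p_weak_upper_gradient \<mu> m p \<Gamma>s h (\<lambda>x. 0)"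
    unfolding p_weak_upper_gradient_def
  proof (intro conjI exI[of _ E])
    show "(\<lambda>x. 0::ennreal) \<in> borel_measurable borel" by simp
    show "E \<subseteq> \<Gamma>s" unfolding E_def by auto
    show "p_modulus \<mu> m p E = 0" by (rule mE)
    show "\<forall>P\<in>\<Gamma>s - E. ennreal \<bar>h (start_pt P) - h (end_pt P)\<bar> \<le> line_int \<mu> (\<lambda>x. 0) P"
      using zero_ends by auto
  qed
  have L0: "Lp_norm m p (\<lambda>x. 0) = 0"
    using p by (simp add: Lp_norm_def enn_powr_def)
  have part1: "Lp_norm m p (\<lambda>x. ennreal \<bar>h x\<bar>) = 0"
  proof -
    have "(\<integral>\<^sup>+ x. enn_powr (ennreal \<bar>h x\<bar>) p \<partial>m) = (\<integral>\<^sup>+ x. 0 \<partial>m)"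
      using assms(10) p by (intro nn_integral_cong_AE) (auto simp: h_def enn_powr_def elim!: AE_mp)
    then show ?thesis using p by (simp add: Lp_norm_def enn_powr_def)
  qed
  have part2: "(INF \<rho> \<in> {\<rho>. p_weak_upper_gradient \<mu> m p \<Gamma>s h \<rho>}. Lp_norm m p \<rho>) = 0"
  proof -
    have "(INF \<rho> \<in> {\<rho>. p_weak_upper_gradient \<mu> m p \<Gamma>s h \<rho>}. Lp_norm m p \<rho>) \<le> Lp_norm m p (\<lambda>x. 0)"
      using wug by (intro INF_lower) auto
    then show ?thesis using L0 by simp
  qed
  show ?thesis using part1 part2 unfolding N1p_norm_def h_def by simp
qed

end
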